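(* Let $M$ be an $N\times N$ and $N_0$ an $r\times N$ complex matrix. Then $I-\widetilde M$ is invertible, and if the series $\sum_{m=0}^\infty N_0M^m$ converges, then $\sum_{m=0}^\infty N_0M^m=N_0(I-\widetilde M)^{-1}$.
   Context: For a square complex matrix $M$ with Jordan decomposition $M=SJS^{-1}$, where $S$ is nonsingular and $J=\mathrm{diag}(J_{n_1}(\lambda_1),\dots,J_{n_k}(\lambda_k))$ with $J_{n_i}(\lambda_i)$ the $n_i\times n_i$ Jordan block for eigenvalue $\lambda_i$, define $\widetilde M=S\widetilde JS^{-1}$, where $\widetilde J=\mathrm{diag}(J^1,\dots,J^k)$ with $J^i=0_{n_i\times n_i}$ if $|\lambda_i|\ge1$ and $J^i=J_{n_i}(\lambda_i)$ otherwise. $I$ is the identity matrix. *)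

theory Defs
  imports "Jordan_Normal_Form.Jordan_Normal_Form"
begin

definition tilde_jordan :: "(nat \<times> complex) list \<Rightarrow> complex mat" where
  "tilde_jordan bs = diag_block_mat
     (map (\<lambda>(n, a). if cmod a \<ge> 1 then 0\<^sub>m n n else jordan_block n a) bs)"

text \<open>Given a Jordan decomposition M = S * jordan_matrix bs * Sinv (Sinv the inverse of S),
  the matrix M-tilde = S * tilde_jordan bs * Sinv.\<close>
definition tilde_mat :: "complex mat \<Rightarrow> complex mat \<Rightarrow> (nat \<times> complex) list \<Rightarrow> complex mat" where
  "tilde_mat S Sinv bs = S * tilde_jordan bs * Sinv"

definition mat_inv :: "complex mat \<Rightarrow> complex mat" where
  "mat_inv A = (SOME B. inverts_mat A B \<and> inverts_mat B A)"

text \<open>A matrix series sum F m (m = 0,1,...) converges to L, entrywise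
  (equivalently in any norm, all matrices being of the same finite size).\<close>
definition mat_sums :: "(nat \<Rightarrow> complex mat) \<Rightarrow> complex mat \<Rightarrow> bool" where
  "mat_sums F L \<longleftrightarrow> (\<forall>i < dim_row L. \<forall>j < dim_col L. (\<lambda>m. F m $$ (i, j)) sums (L $$ (i, j)))"

end

theory Submission
  imports Defs
begin

lemma diag_block_carrier:
  fixes f :: "nat \<times> complex \<Rightarrow> complex mat"
  assumes "\<forall>x\<in>set xs. f x \<in> carrier_mat (fst x) (fst x)"
  shows "diag_block_mat (map f xs) \<in> carrier_mat (sum_list (map fst xs)) (sum_list (map fst xs))"
  using assms by (induct xs) (auto simp: Let_def)

lemma diag_block_mult:
  fixes f g :: "nat \<times> complex \<Rightarrow> complex mat"
  assumes "\<forall>x\<in>set xs. f x \<in> carrier_mat (fst x) (fst x) \<and> g x \<in> carrier_mat (fst x) (fst x)"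
  shows "diag_block_mat (map f xs) * diag_block_mat (map g xs) = diag_block_mat (map (\<lambda>x. f x * g x) xs)"
  using assms
proof (induct xs)
  case Nil then show ?case by auto
next
  case (Cons x xs)
  have F: "diag_block_mat (map f xs) \<in> carrier_mat (sum_list (map fst xs)) (sum_list (map fst xs))"
    using Cons.prems by (intro diag_block_carrier) auto
  have G: "diag_block_mat (map g xs) \<in> carrier_mat (sum_list (map fst xs)) (sum_list (map fst xs))"
    using Cons.prems by (intro diag_block_carrier) auto
  have fx: "f x \<in> carrier_mat (fst x) (fst x)" and gx: "g x \<in> carrier_mat (fst x) (fst x)" using Cons.prems by auto
  have IH: "diag_block_mat (map f xs) * diag_block_mat (map g xs) = diag_block_mat (map (\<lambda>x. f x * g x) xs)"
    using Cons by auto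
  have P: "diag_block_mat (map (\<lambda>x. f x * g x) xs) \<in> carrier_mat (sum_list (map fst xs)) (sum_list (map fst xs))"
    using Cons.prems by (intro diag_block_carrier) auto
  show ?case
    apply (simp add: Let_def)
    apply (subst mult_four_block_mat[OF fx _ _ F gx _ _ G])
    using F G fx gx IH P by auto
qed

lemma diag_block_one_minus:
  fixes f :: "nat \<times> complex \<Rightarrow> complex mat"
  assumes "\<forall>x\<in>set xs. f x \<in> carrier_mat (fst x) (fst x)"
  shows "1\<^sub>m (sum_list (map fst xs)) - diag_block_mat (map f xs) = diag_block_mat (map (\<lambda>x. 1\<^sub>m (fst x) - f x) xs)"
  using assms
proof (induct xs)
  case Nil then show ?case by auto
next
  case (Cons x xs)
  have F: "diag_block_mat (map f xs) \<in> carrier_mat (sum_list (map fst xs)) (sum_list (map fst xs))"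
    using Cons.prems by (intro diag_block_carrier) auto
  have fx: "f x \<in> carrier_mat (fst x) (fst x)" using Cons.prems by auto
  have IH: "1\<^sub>m (sum_list (map fst xs)) - diag_block_mat (map f xs) = diag_block_mat (map (\<lambda>x. 1\<^sub>m (fst x) - f x) xs)"
    using Cons by auto
  show ?case
    apply (simp add: Let_def IH[symmetric])
    apply (rule eq_matI) using F fx by auto
qed

lemma det_diag_block:
  fixes f :: "nat \<times> complex \<Rightarrow> complex mat"
  assumes "\<forall>x\<in>set xs. f x \<in> carrier_mat (fst x) (fst x)"
  shows "det (diag_block_mat (map f xs)) = prod_list (map (\<lambda>x. det (f x)) xs)"
  using assms
proof (induct xs)
  case Nil then show ?case by (simp add: det_def)
next
  case (Cons x xs)
  have F: "diag_block_mat (map f xs) \<in> carrier_mat (sum_list (map fst xs)) (sum_list (map fst xs))"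
    using Cons.prems by (intro diag_block_carrier) auto
  have fx: "f x \<in> carrier_mat (fst x) (fst x)" using Cons.prems by auto
  show ?case
  proof -
    have d: "dim_row (f x) = fst x" "dim_col (f x) = fst x" using fx by auto
    show ?thesis using F fx Cons
      by (simp add: Let_def d det_four_block_mat_lower_left_zero[OF fx _ _ F])
  qed
qed


definition lblk :: "complex mat \<Rightarrow> nat \<Rightarrow> complex mat" where
  "lblk X n = mat (dim_row X) n (\<lambda>(i,j). X $$ (i,j))"
definition rblk :: "complex mat \<Rightarrow> nat \<Rightarrow> complex mat" where
  "rblk X n = mat (dim_row X) (dim_col X - n) (\<lambda>(i,j). X $$ (i,j+n))"

lemma split_cols:
  assumes "X \<in> carrier_mat r (n+k)"
  shows "X = four_block_mat (lblk X n) (rblk X n) (0\<^sub>m 0 n) (0\<^sub>m 0 k)"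
  using assms by (intro eq_matI) (auto simp: lblk_def rblk_def)

lemma split_mult:
  assumes X: "X \<in> carrier_mat r (n+k)" and A: "A \<in> carrier_mat n n" and B: "B \<in> carrier_mat k k"
  shows "X * four_block_mat A (0\<^sub>m n k) (0\<^sub>m k n) B
     = four_block_mat (lblk X n * A) (rblk X n * B) (0\<^sub>m 0 n) (0\<^sub>m 0 k)"
proof -
  have c1: "lblk X n \<in> carrier_mat r n" "rblk X n \<in> carrier_mat r k" using X by (auto simp: lblk_def rblk_def)
  have "X * four_block_mat A (0\<^sub>m n k) (0\<^sub>m k n) B =
     four_block_mat (lblk X n) (rblk X n) (0\<^sub>m 0 n) (0\<^sub>m 0 k) * four_block_mat A (0\<^sub>m n k) (0\<^sub>m k n) B"
    using split_cols[OF X] by simp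
  also have "\<dots> = four_block_mat (lblk X n * A + rblk X n * 0\<^sub>m k n) (lblk X n * 0\<^sub>m n k + rblk X n * B)
    (0\<^sub>m 0 n * A + 0\<^sub>m 0 k * 0\<^sub>m k n) (0\<^sub>m 0 n * 0\<^sub>m n k + 0\<^sub>m 0 k * B)"
    by (rule mult_four_block_mat[OF c1 _ _ A _ _ B], auto)
  also have "\<dots> = four_block_mat (lblk X n * A) (rblk X n * B) (0\<^sub>m 0 n) (0\<^sub>m 0 k)"
    using c1 A B by (intro arg_cong4[where f=four_block_mat] eq_matI) auto
  finally show ?thesis .
qed

lemma pow_nonvanish:
  fixes x a :: complex
  assumes "1 \<le> cmod a" "(\<lambda>m. x * a ^ m) \<longlonglongrightarrow> 0"
  shows "x = 0"
proof -
  have "(\<lambda>m. norm (x * a ^ m)) \<longlonglongrightarrow> 0" using tendsto_norm_zero[OF assms(2)] .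
  moreover have "\<forall>m. norm x \<le> norm (x * a ^ m)"
  proof
    fix m
    have "1 \<le> cmod a ^ m" using assms(1) by (simp add: one_le_power)
    then have "norm x * 1 \<le> norm x * cmod a ^ m" by (intro mult_left_mono) auto
    then show "norm x \<le> norm (x * a ^ m)" by (simp add: norm_mult norm_power)
  qed
  ultimately have "norm x \<le> 0" by (intro tendsto_lowerbound) (auto intro: always_eventually)
  then show ?thesis by simp
qed

lemma jb_vanish:
  fixes X :: "complex mat"
  assumes X: "X \<in> carrier_mat r n" and a: "1 \<le> cmod a"
    and lim: "\<forall>i<r. \<forall>j<n. (\<lambda>m. (X * jordan_block n a ^\<^sub>m m) $$ (i,j)) \<longlonglongrightarrow> 0"
  shows "X = 0\<^sub>m r n"
proof -
  have main: "\<forall>i<r. X $$ (i,j) = 0" if "j < n" for j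
    using that
  proof (induct j rule: less_induct)
    case (less j)
    show ?case
    proof (intro allI impI)
      fix i assume i: "i < r"
      have eq: "(X * jordan_block n a ^\<^sub>m m) $$ (i,j) = X $$ (i,j) * a ^ m" for m
      proof -
        have "(X * jordan_block n a ^\<^sub>m m) $$ (i,j) =
          (\<Sum>k\<in>{0..<n}. X $$ (i,k) * (if k \<le> j then of_nat (m choose (j - k)) * a ^ (m + k - j) else 0))"
          using X i less.prems by (simp add: jordan_block_pow scalar_prod_def)
        also have "\<dots> = X $$ (i,j) * (if j \<le> j then of_nat (m choose (j - j)) * a ^ (m + j - j) else 0)"
          apply (subst sum.remove[of _ j]) using less.prems apply auto[2]
          apply (subst sum.neutral) using less.hyps i by auto
        finally show ?thesis by simp
      qed
      have "(\<lambda>m. (X * jordan_block n a ^\<^sub>m m) $$ (i,j)) \<longlonglongrightarrow> 0" using lim i less.prems by auto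
      then show "X $$ (i,j) = 0"
        by (intro pow_nonvanish[OF a]) (simp add: eq)
    qed
  qed
  show ?thesis using X main by (intro eq_matI) auto
qed


definition dproj :: "(nat \<times> complex) list \<Rightarrow> complex mat" where
  "dproj bs = diag_block_mat (map (\<lambda>(n,a). if 1 \<le> cmod a then 0\<^sub>m n n else 1\<^sub>m n) bs)"

lemma dproj_carrier: "dproj bs \<in> carrier_mat (sum_list (map fst bs)) (sum_list (map fst bs))"
  unfolding dproj_def by (rule diag_block_carrier) auto

lemma blocks_vanish:
  fixes X :: "complex mat"
  assumes "X \<in> carrier_mat r (sum_list (map fst bs))"
   and "\<forall>i<r. \<forall>j<sum_list (map fst bs). (\<lambda>m. (X * jordan_matrix bs ^\<^sub>m m) $$ (i,j)) \<longlonglongrightarrow> 0"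
  shows "X * dproj bs = X"
  using assms
proof (induct bs arbitrary: X)
  case Nil
  then show ?case by (intro eq_matI) (auto simp: dproj_def)
next
  case (Cons p bs)
  obtain n a where p: "p = (n,a)" by fastforce
  define k where "k = sum_list (map fst bs)"
  have X: "X \<in> carrier_mat r (n + k)" using Cons.prems p k_def by auto
  define X1 where "X1 = lblk X n"
  define X2 where "X2 = rblk X n"
  have c1: "X1 \<in> carrier_mat r n" "X2 \<in> carrier_mat r k" using X by (auto simp: X1_def X2_def lblk_def rblk_def)
  have E: "diag_block_mat (map (\<lambda>(n,a). jordan_block n a ^\<^sub>m m) bs) = jordan_matrix bs ^\<^sub>m m" for m
    by (simp add: jordan_matrix_pow)
  have JBc: "jordan_matrix bs ^\<^sub>m m \<in> carrier_mat k k" for m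
    unfolding k_def by (rule pow_carrier_mat[OF jordan_matrix_carrier])
  have JB: "jordan_matrix (p#bs) ^\<^sub>m m = four_block_mat (jordan_block n a ^\<^sub>m m) (0\<^sub>m n k) (0\<^sub>m k n) (jordan_matrix bs ^\<^sub>m m)" for m
    apply (subst jordan_matrix_pow)
    using JBc[of m] by (simp add: Let_def E p k_def)
  have XJ: "X * jordan_matrix (p#bs) ^\<^sub>m m = four_block_mat (X1 * jordan_block n a ^\<^sub>m m) (X2 * jordan_matrix bs ^\<^sub>m m) (0\<^sub>m 0 n) (0\<^sub>m 0 k)" for m
    unfolding JB X1_def X2_def by (rule split_mult[OF X _ JBc]) simp
  have lim1: "\<forall>i<r. \<forall>j<n. (\<lambda>m. (X1 * jordan_block n a ^\<^sub>m m) $$ (i,j)) \<longlonglongrightarrow> 0"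
  proof (intro allI impI)
    fix i j assume ij: "i < r" "j < n"
    have "(\<lambda>m. (X * jordan_matrix (p#bs) ^\<^sub>m m) $$ (i,j)) \<longlonglongrightarrow> 0" using Cons.prems(2) ij p by auto
    moreover have "(X * jordan_matrix (p#bs) ^\<^sub>m m) $$ (i,j) = (X1 * jordan_block n a ^\<^sub>m m) $$ (i,j)" for m
      unfolding XJ using ij c1 JBc[of m] by simp
    ultimately show "(\<lambda>m. (X1 * jordan_block n a ^\<^sub>m m) $$ (i,j)) \<longlonglongrightarrow> 0" by simp
  qed
  have lim2: "\<forall>i<r. \<forall>j<k. (\<lambda>m. (X2 * jordan_matrix bs ^\<^sub>m m) $$ (i,j)) \<longlonglongrightarrow> 0"
  proof (intro allI impI)
    fix i j assume ij: "i < r" "j < k"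
    have "(\<lambda>m. (X * jordan_matrix (p#bs) ^\<^sub>m m) $$ (i,j+n)) \<longlonglongrightarrow> 0" using Cons.prems(2) ij p k_def by auto
    moreover have "(X * jordan_matrix (p#bs) ^\<^sub>m m) $$ (i,j+n) = (X2 * jordan_matrix bs ^\<^sub>m m) $$ (i,j)" for m
      unfolding XJ using ij c1 JBc[of m] by simp
    ultimately show "(\<lambda>m. (X2 * jordan_matrix bs ^\<^sub>m m) $$ (i,j)) \<longlonglongrightarrow> 0" by simp
  qed
  have IH: "X2 * dproj bs = X2" using Cons.hyps[OF _ lim2[unfolded k_def]] c1 k_def by auto
  define Db where "Db = (if 1 \<le> cmod a then 0\<^sub>m n n else 1\<^sub>m n :: complex mat)"
  have Dbc: "Db \<in> carrier_mat n n" by (auto simp: Db_def)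
  have B1: "X1 * Db = X1"
  proof (cases "1 \<le> cmod a")
    case True
    then have "X1 = 0\<^sub>m r n" using jb_vanish[OF c1(1) True lim1] by simp
    then show ?thesis using True by (simp add: Db_def)
  next
    case False then show ?thesis using c1 by (simp add: Db_def)
  qed
  have Dp: "dproj (p#bs) = four_block_mat Db (0\<^sub>m n k) (0\<^sub>m k n) (dproj bs)"
    using dproj_carrier[of bs] by (simp add: dproj_def Let_def p Db_def k_def)
  have "X * dproj (p#bs) = four_block_mat (X1 * Db) (X2 * dproj bs) (0\<^sub>m 0 n) (0\<^sub>m 0 k)"
    unfolding Dp X1_def X2_def by (rule split_mult[OF X Dbc]) (use dproj_carrier k_def in auto)
  also have "\<dots> = X" using B1 IH split_cols[OF X, symmetric] by (simp add: X1_def X2_def)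
  finally show ?case .
qed


lemma tj_carrier: "tilde_jordan bs \<in> carrier_mat (sum_list (map fst bs)) (sum_list (map fst bs))"
  unfolding tilde_jordan_def by (rule diag_block_carrier) auto

lemma dproj_tj_pow: "dproj bs * tilde_jordan bs ^\<^sub>m m = dproj bs * jordan_matrix bs ^\<^sub>m m"
proof -
  let ?d = "\<lambda>(n,a). if 1 \<le> cmod a then 0\<^sub>m n n else (1\<^sub>m n :: complex mat)"
  let ?t = "\<lambda>(n,a). if 1 \<le> cmod a then 0\<^sub>m n n else (jordan_block n a :: complex mat)"
  have "tilde_jordan bs ^\<^sub>m m = diag_block_mat (map (\<lambda>A. A ^\<^sub>m m) (map ?t bs))"
    unfolding tilde_jordan_def by (rule diag_block_pow_mat) (auto simp: square_mat.simps)
  also have "\<dots> = diag_block_mat (map (\<lambda>x. ?t x ^\<^sub>m m) bs)" by (simp add: o_def)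
  finally have T: "tilde_jordan bs ^\<^sub>m m = diag_block_mat (map (\<lambda>x. ?t x ^\<^sub>m m) bs)" .
  have J: "jordan_matrix bs ^\<^sub>m m = diag_block_mat (map (\<lambda>x. (case x of (n,a) \<Rightarrow> jordan_block n a) ^\<^sub>m m) bs)"
    unfolding jordan_matrix_pow by (intro arg_cong[where f=diag_block_mat]) auto
  have "dproj bs * tilde_jordan bs ^\<^sub>m m = diag_block_mat (map (\<lambda>x. ?d x * ?t x ^\<^sub>m m) bs)"
    unfolding T dproj_def by (rule diag_block_mult) auto
  also have "\<dots> = diag_block_mat (map (\<lambda>x. ?d x * (case x of (n,a) \<Rightarrow> jordan_block n a) ^\<^sub>m m) bs)"
    by (intro arg_cong[where f=diag_block_mat] map_cong refl) auto
  also have "\<dots> = dproj bs * jordan_matrix bs ^\<^sub>m m"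
    unfolding J dproj_def by (rule diag_block_mult[symmetric]) auto
  finally show ?thesis .
qed

lemma det_one_minus_tj: "det (1\<^sub>m (sum_list (map fst bs)) - tilde_jordan bs) \<noteq> 0"
proof -
  let ?t = "\<lambda>(n,a). if 1 \<le> cmod a then 0\<^sub>m n n else (jordan_block n a :: complex mat)"
  have "1\<^sub>m (sum_list (map fst bs)) - tilde_jordan bs = diag_block_mat (map (\<lambda>x. 1\<^sub>m (fst x) - ?t x) bs)"
    unfolding tilde_jordan_def by (rule diag_block_one_minus) auto
  then have "det (1\<^sub>m (sum_list (map fst bs)) - tilde_jordan bs) = prod_list (map (\<lambda>x. det (1\<^sub>m (fst x) - ?t x)) bs)"
  proof -
    have c: "\<forall>x\<in>set bs. 1\<^sub>m (fst x) - ?t x \<in> carrier_mat (fst x) (fst x)"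
      by (auto split: prod.split)
    show ?thesis using det_diag_block[OF c] by (simp only: \<open>1\<^sub>m _ - tilde_jordan bs = _\<close>)
  qed
  also have "\<dots> \<noteq> 0"
  proof -
    have "det (1\<^sub>m (fst x) - ?t x) \<noteq> 0" for x
    proof -
      obtain n a where x: "x = (n,a)" by fastforce
      show ?thesis
      proof (cases "1 \<le> cmod a")
        case True
        have "1\<^sub>m n - 0\<^sub>m n n = (1\<^sub>m n :: complex mat)" by (intro eq_matI) auto
        then show ?thesis using True by (simp add: x)
      next
        case False
        then have a1: "a \<noteq> 1" by auto
        have ut: "upper_triangular (1\<^sub>m n - jordan_block n a)"
          by (rule upper_triangularI) auto
        have "det (1\<^sub>m n - jordan_block n a) = prod_list (diag_mat (1\<^sub>m n - jordan_block n a))"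
          by (rule det_upper_triangular[OF ut]) auto
        also have "\<dots> \<noteq> 0" using a1 by (auto simp: prod_list_zero_iff diag_mat_def)
        finally show ?thesis using False by (simp add: x)
      qed
    qed
    then show ?thesis by (auto simp: prod_list_zero_iff)
  qed
  finally show ?thesis .
qed

lemma lim_mult_right:
  fixes A :: "nat \<Rightarrow> complex mat"
  assumes A: "\<And>m. A m \<in> carrier_mat r n" and B: "B \<in> carrier_mat n c"
   and lim: "\<forall>i<r. \<forall>j<n. (\<lambda>m. A m $$ (i,j)) \<longlonglongrightarrow> 0"
  shows "\<forall>i<r. \<forall>j<c. (\<lambda>m. (A m * B) $$ (i,j)) \<longlonglongrightarrow> 0"
proof (intro allI impI)
  fix i j assume ij: "i < r" "j < c"
  have e: "(A m * B) $$ (i,j) = (\<Sum>k\<in>{0..<n}. A m $$ (i,k) * B $$ (k,j))" for m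
    using A[of m] B ij by (simp add: scalar_prod_def)
  show "(\<lambda>m. (A m * B) $$ (i,j)) \<longlonglongrightarrow> 0"
    unfolding e by (intro tendsto_null_sum tendsto_mult_left_zero) (use lim ij in auto)
qed

lemma sums_mult_right:
  fixes F :: "nat \<Rightarrow> complex mat"
  assumes F: "\<And>m. F m \<in> carrier_mat r n" and L: "L \<in> carrier_mat r n" and B: "B \<in> carrier_mat n c"
   and s: "mat_sums F L"
  shows "\<forall>i<r. \<forall>j<c. (\<lambda>m. (F m * B) $$ (i,j)) sums ((L * B) $$ (i,j))"
proof (intro allI impI)
  fix i j assume ij: "i < r" "j < c"
  have e: "(F m * B) $$ (i,j) = (\<Sum>k\<in>{0..<n}. F m $$ (i,k) * B $$ (k,j))" for m
    using F[of m] B ij by (simp add: scalar_prod_def)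
  have e2: "(L * B) $$ (i,j) = (\<Sum>k\<in>{0..<n}. L $$ (i,k) * B $$ (k,j))"
    using L B ij by (simp add: scalar_prod_def)
  show "(\<lambda>m. (F m * B) $$ (i,j)) sums ((L * B) $$ (i,j))"
    unfolding e e2 by (intro sums_sum sums_mult2) (use s L ij in \<open>auto simp: mat_sums_def\<close>)
qed


lemma assoc5:
  fixes A B C D E :: "complex mat"
  assumes "A \<in> carrier_mat r n" "B \<in> carrier_mat n n" "C \<in> carrier_mat n n" "D \<in> carrier_mat n n" "E \<in> carrier_mat n n"
  shows "A * (B * C * D) * E = A * B * C * (D * E)"
proof -
  have "A * (B * C * D) * E = A * (B * C * D * E)" using assms by (intro assoc_mult_mat) auto
  also have "B * C * D * E = B * C * (D * E)" using assms by (intro assoc_mult_mat) auto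
  also have "A * (B * C * (D * E)) = A * (B * C) * (D * E)" using assms by (intro assoc_mult_mat[symmetric]) auto
  also have "A * (B * C) = A * B * C" using assms by (intro assoc_mult_mat[symmetric]) auto
  finally show ?thesis .
qed
lemma assoc4:
  fixes A B C D :: "complex mat"
  assumes "A \<in> carrier_mat r n" "B \<in> carrier_mat n n" "C \<in> carrier_mat n n" "D \<in> carrier_mat n n"
  shows "A * (B * C * D) = A * B * C * D" "A * B * C * D = A * (B * C) * D"
proof -
  have "A * (B * C * D) = A * (B * C) * D" using assms by (intro assoc_mult_mat[symmetric]) auto
  also have "A * (B * C) = A * B * C" using assms by (intro assoc_mult_mat[symmetric]) auto
  finally show "A * (B * C * D) = A * B * C * D" .
  show "A * B * C * D = A * (B * C) * D" using assms by (subst assoc_mult_mat[of A r n B n C n]) auto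
qed

theorem corollaryA1:
  fixes M N0 S Sinv :: "complex mat" and bs :: "(nat \<times> complex) list" and N r :: nat
  assumes "M \<in> carrier_mat N N"
    and "N0 \<in> carrier_mat r N"
    and "similar_mat_wit M (jordan_matrix bs) S Sinv"
  shows "invertible_mat (1\<^sub>m N - tilde_mat S Sinv bs)
    \<and> ((\<exists>L \<in> carrier_mat r N. mat_sums (\<lambda>m. N0 * M ^\<^sub>m m) L)
        \<longrightarrow> mat_sums (\<lambda>m. N0 * M ^\<^sub>m m) (N0 * mat_inv (1\<^sub>m N - tilde_mat S Sinv bs)))"
proof -
  define J where "J = jordan_matrix bs"
  define TJ where "TJ = tilde_jordan bs"
  define D where "D = dproj bs"
  define T where "T = tilde_mat S Sinv bs"
  have dM: "dim_row M = N" using assms(1) by auto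
  have w: "{M, J, S, Sinv} \<subseteq> carrier_mat N N" "S * Sinv = 1\<^sub>m N" "Sinv * S = 1\<^sub>m N" "M = S * J * Sinv"
    using assms(3) unfolding similar_mat_wit_def Let_def dM J_def by auto
  have Jc: "J \<in> carrier_mat N N" and Sc: "S \<in> carrier_mat N N" and Sic: "Sinv \<in> carrier_mat N N"
    using w(1) by auto
  have K: "sum_list (map fst bs) = N" using Jc unfolding J_def by auto
  have TJc: "TJ \<in> carrier_mat N N" using tj_carrier[of bs] K TJ_def by simp
  have Dc: "D \<in> carrier_mat N N" using dproj_carrier[of bs] K D_def by simp
  have Tdef: "T = S * TJ * Sinv" by (simp add: T_def TJ_def tilde_mat_def)
  have Tc: "T \<in> carrier_mat N N" using Tdef Sc TJc Sic by auto
  have IT: "1\<^sub>m N - T = S * (1\<^sub>m N - TJ) * Sinv"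
  proof -
    have "S * (1\<^sub>m N - TJ) = S - S * TJ"
      using mult_minus_distrib_mat[OF Sc one_carrier_mat TJc] Sc by simp
    then have "S * (1\<^sub>m N - TJ) * Sinv = S * Sinv - S * TJ * Sinv"
      using minus_mult_distrib_mat[of S N N "S * TJ" Sinv N] Sc TJc Sic by simp
    then show ?thesis using w(2) Tdef by simp
  qed
  have detne: "det (1\<^sub>m N - T) \<noteq> 0"
  proof -
    have c: "1\<^sub>m N - TJ \<in> carrier_mat N N" using TJc by auto
    have "det (1\<^sub>m N - T) = det S * det (1\<^sub>m N - TJ) * det Sinv"
      unfolding IT using det_mult[OF mult_carrier_mat[OF Sc c] Sic] det_mult[OF Sc c] by simp
    moreover have "det S * det Sinv = 1" using det_mult[OF Sc Sic] w(2) by simp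
    moreover have "det (1\<^sub>m N - TJ) \<noteq> 0" using det_one_minus_tj[of bs] K TJ_def by simp
    ultimately show ?thesis by (metis mult.commute mult.left_commute mult_cancel_left1 no_zero_divisors)
  qed
  have ITc: "1\<^sub>m N - T \<in> carrier_mat N N" using Tc by auto
  from det_non_zero_imp_unit[OF ITc detne, of "()"]
  obtain B where Bc: "B \<in> carrier_mat N N" and B1: "B * (1\<^sub>m N - T) = 1\<^sub>m N" and B2: "(1\<^sub>m N - T) * B = 1\<^sub>m N"
    unfolding Units_def ring_mat_def by auto
  have inv: "invertible_mat (1\<^sub>m N - T)"
    unfolding invertible_mat_def inverts_mat_def using ITc Tc Bc B1 B2 by (auto intro!: exI[of _ B])
  define Bi where "Bi = mat_inv (1\<^sub>m N - T)"
  have "inverts_mat (1\<^sub>m N - T) Bi \<and> inverts_mat Bi (1\<^sub>m N - T)"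
    unfolding Bi_def mat_inv_def
    by (rule someI_ex) (use inv in \<open>auto simp: invertible_mat_def\<close>)
  then have Bi1: "(1\<^sub>m N - T) * Bi = 1\<^sub>m N" and Bi2: "Bi * (1\<^sub>m N - T) = 1\<^sub>m (dim_row Bi)"
    unfolding inverts_mat_def using ITc by auto
  have Bic: "Bi \<in> carrier_mat N N"
  proof -
    have "dim_col Bi = N" using arg_cong[OF Bi1, of dim_col] by simp
    moreover have "dim_row Bi = N" using arg_cong[OF Bi2, of dim_col] Tc by simp
    ultimately show ?thesis by auto
  qed
  have part2: "mat_sums (\<lambda>m. N0 * M ^\<^sub>m m) (N0 * Bi)"
    if "L \<in> carrier_mat r N" "mat_sums (\<lambda>m. N0 * M ^\<^sub>m m) L" for L
  proof -
    define F where "F = (\<lambda>m. N0 * M ^\<^sub>m m)"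
    have Lc: "L \<in> carrier_mat r N" and sL: "mat_sums F L" using that F_def by auto
    have Fc: "F m \<in> carrier_mat r N" for m using assms(1,2) F_def by auto
    have Mpow: "M ^\<^sub>m m = S * J ^\<^sub>m m * Sinv" for m
      using similar_mat_wit_pow_id[OF assms(3)] J_def by simp
    have wT: "similar_mat_wit T TJ S Sinv"
      unfolding similar_mat_wit_def Let_def using Tc TJc Sc Sic w(2,3) Tdef by auto
    have Tpow: "T ^\<^sub>m m = S * TJ ^\<^sub>m m * Sinv" for m
      using similar_mat_wit_pow_id[OF wT] .
    have term0: "\<forall>i<r. \<forall>j<N. (\<lambda>m. F m $$ (i,j)) \<longlonglongrightarrow> 0"
    proof (intro allI impI)
      fix i j assume "i < r" "j < N"
      then have "(\<lambda>m. F m $$ (i,j)) sums (L $$ (i,j))" using sL Lc unfolding mat_sums_def by auto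
      then show "(\<lambda>m. F m $$ (i,j)) \<longlonglongrightarrow> 0" by (intro summable_LIMSEQ_zero sums_summable)
    qed
    define Y where "Y = N0 * S"
    have Yc: "Y \<in> carrier_mat r N" using Y_def assms(2) Sc by auto
    have Jm: "J ^\<^sub>m m \<in> carrier_mat N N" for m using Jc by auto
    have TJm: "TJ ^\<^sub>m m \<in> carrier_mat N N" for m using TJc by auto
    have FS: "F m * S = Y * J ^\<^sub>m m" for m
    proof -
      have "F m * S = N0 * (S * J ^\<^sub>m m * Sinv) * S" by (simp add: F_def Mpow)
      also have "\<dots> = Y * J ^\<^sub>m m * (Sinv * S)"
        unfolding Y_def by (rule assoc5[OF assms(2) Sc Jm Sic Sc])
      also have "\<dots> = Y * J ^\<^sub>m m" using w(3) right_mult_one_mat[OF mult_carrier_mat[OF Yc Jm[of m]]] by simp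
      finally show ?thesis .
    qed
    have limY: "\<forall>i<r. \<forall>j<N. (\<lambda>m. (Y * J ^\<^sub>m m) $$ (i,j)) \<longlonglongrightarrow> 0"
      using lim_mult_right[OF Fc Sc term0] FS by simp
    have YD: "Y * D = Y"
      unfolding D_def by (rule blocks_vanish) (use Yc limY K J_def in auto)
    have FT: "N0 * T ^\<^sub>m m = F m" for m
    proof -
      have "N0 * T ^\<^sub>m m = Y * TJ ^\<^sub>m m * Sinv"
        unfolding Tpow Y_def by (rule assoc4(1)[OF assms(2) Sc TJm Sic])
      also have "\<dots> = Y * D * TJ ^\<^sub>m m * Sinv" using YD by simp
      also have "\<dots> = Y * (D * TJ ^\<^sub>m m) * Sinv" by (rule assoc4(2)[OF Yc Dc TJm Sic])
      also have "\<dots> = Y * (D * J ^\<^sub>m m) * Sinv" using dproj_tj_pow[of bs m] D_def TJ_def J_def by simp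
      also have "\<dots> = Y * D * J ^\<^sub>m m * Sinv" by (rule assoc4(2)[OF Yc Dc Jm Sic, symmetric])
      also have "\<dots> = F m" unfolding YD unfolding F_def Mpow Y_def by (rule assoc4(1)[OF assms(2) Sc Jm Sic, symmetric])
      finally show ?thesis .
    qed
    have Fstep: "F m * (1\<^sub>m N - T) = F m - F (Suc m)" for m
    proof -
      have "F m * (1\<^sub>m N - T) = F m * 1\<^sub>m N - F m * T"
        using mult_minus_distrib_mat[OF Fc one_carrier_mat Tc] .
      also have "F m * T = F (Suc m)"
        using FT[of m] FT[of "Suc m"] assoc_mult_mat[OF assms(2) pow_carrier_mat[OF Tc] Tc, of m] by simp
      finally show ?thesis using Fc[of m] by simp
    qed
    have LT: "L * (1\<^sub>m N - T) = N0"
    proof (rule eq_matI)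
      fix i j assume ij: "i < dim_row N0" "j < dim_col N0"
      then have ij': "i < r" "j < N" using assms(2) by auto
      have s1: "(\<lambda>m. (F m * (1\<^sub>m N - T)) $$ (i,j)) sums ((L * (1\<^sub>m N - T)) $$ (i,j))"
        using sums_mult_right[OF Fc Lc ITc sL] ij' by auto
      have e: "(F m * (1\<^sub>m N - T)) $$ (i,j) = F m $$ (i,j) - F (Suc m) $$ (i,j)" for m
        unfolding Fstep using Fc[of m] Fc[of "Suc m"] ij' by simp
      have s2: "(\<lambda>m. F m $$ (i,j) - F (Suc m) $$ (i,j)) sums (F 0 $$ (i,j) - 0)"
        by (rule telescope_sums') (use term0 ij' in auto)
      have "F 0 = N0" using assms(2) dM by (simp add: F_def)
      have s3: "(\<lambda>m. (F m * (1\<^sub>m N - T)) $$ (i,j)) sums (F 0 $$ (i,j))"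
        using s2 unfolding e by simp
      have "(L * (1\<^sub>m N - T)) $$ (i,j) = F 0 $$ (i,j)" by (rule sums_unique2[OF s1 s3])
      then show "(L * (1\<^sub>m N - T)) $$ (i,j) = N0 $$ (i,j)" using \<open>F 0 = N0\<close> by simp
    qed (use Lc Tc assms(2) in auto)
    have "L = L * ((1\<^sub>m N - T) * Bi)" using Bi1 Lc by simp
    also have "\<dots> = L * (1\<^sub>m N - T) * Bi" by (rule assoc_mult_mat[OF Lc ITc Bic, symmetric])
    also have "\<dots> = N0 * Bi" unfolding LT ..
    finally show ?thesis using sL F_def by simp
  qed
  show ?thesis using inv part2 by (auto simp: T_def Bi_def)
qed

end
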